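(* Let $L>0$, $J\ge2$ and $\delta t>0$ with $\delta t/\delta x^2\le1/2$, and set $\eta=\max_{1\le\ell\le J-1}|1+\delta t\,\lambda_\ell|$. Then for all $n\ge1$, $\delta t\sum_{k=0}^{n-1}\eta^k\le 2L^2$.
   Context: $\delta x=L/(J-1)$, $\lambda_\ell=-\frac4{\delta x^2}\sin^2\big(\frac{\ell\pi}{2J}\big)$ for $0\le\ell\le J-1$. *)

theory Defs
  imports Complex_Main
begin

definition grid_dx :: "real \<Rightarrow> nat \<Rightarrow> real" where
  "grid_dx L J = L / (real J - 1)"

definition eig :: "real \<Rightarrow> nat \<Rightarrow> nat \<Rightarrow> real" where
  "eig L J l = - (4 / (grid_dx L J)^2) * (sin (real l * pi / (2 * real J)))^2"

definition eta :: "real \<Rightarrow> nat \<Rightarrow> real \<Rightarrow> real" where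
  "eta L J dt = Max ((\<lambda>l. \<bar>1 + dt * eig L J l\<bar>) ` {1..J-1})"

end

theory Submission
  imports Defs
begin

lemma sin_lb: fixes y :: real assumes "0 \<le> y" "y \<le> 1" shows "5/6 * y \<le> sin y"
proof -
  have "\<bar>sin y - (\<Sum>m<3. sin_coeff m * y ^ m)\<bar> \<le> inverse (fact 3) * \<bar>y\<bar> ^ 3"
    by (rule Maclaurin_sin_bound)
  moreover have "(\<Sum>m<3. sin_coeff m * y ^ m) = y"
    by (simp add: sin_coeff_def eval_nat_numeral)
  moreover have "y^3 \<le> y" using assms
    by (metis le_numeral_extra(4) one_le_numeral power_le_imp_le_exp power_one_right
        power_decreasing zero_less_numeral)
  ultimately have "\<bar>sin y - y\<bar> \<le> y / 6" using assms by (simp add: eval_nat_numeral fact_numeral)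
  thus ?thesis by linarith
qed

lemma sin_grid_lb:
  fixes J m :: nat
  assumes "J \<ge> 2" "1 \<le> m" "m \<le> J - 1"
  shows "1 / (8 * (real J - 1)^2) \<le> (sin (real m * pi / (2 * real J)))^2"
proof -
  define y where "y = pi / (2 * real J)"
  have J: "real J \<ge> 2" using assms by simp
  have y1: "1 / real J \<le> y" using J pi_ge_two unfolding y_def by (simp add: field_simps)
  have y2: "y \<le> 1" using J pi_less_4 unfolding y_def by (simp add: field_simps)
  have y0: "0 \<le> y" unfolding y_def using J by simp
  have "real m \<le> real J - 1" using assms by linarith
  hence xle: "real m * pi / (2 * real J) \<le> pi/2" using J by (simp add: field_simps)
  have xge: "y \<le> real m * pi / (2 * real J)" unfolding y_def using assms J
    by (simp add: field_simps)
  have "sin y \<le> sin (real m * pi / (2 * real J))"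
    using xle xge y0 y2 pi_ge_two by (subst sin_mono_le_eq) (linarith+)
  moreover have "5/6 * (1 / real J) \<le> sin y" using sin_lb[OF y0 y2] y1 by linarith
  ultimately have s: "5/(6 * real J) \<le> sin (real m * pi / (2 * real J))" by simp
  have "(5/(6 * real J))^2 \<le> (sin (real m * pi / (2 * real J)))^2"
    using s J by (intro power_mono) auto
  moreover have "1 / (8 * (real J - 1)^2) \<le> (5/(6 * real J))^2"
  proof -
    have "36 * real J ^2 \<le> 200 * (real J - 1)^2" using J
    proof -
      have "0 \<le> (real J - 2) * (164 * real J - 72)" using J by (intro mult_nonneg_nonneg) auto
      thus ?thesis by (simp add: power2_eq_square algebra_simps)
    qed
    thus ?thesis using J by (simp add: field_simps power2_eq_square)
  qed
  ultimately show ?thesis by linarith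
qed

theorem proposition3p3:
  fixes L dt :: real and J n :: nat
  assumes "L > 0" and "J \<ge> 2" and "dt > 0"
    and "dt / (grid_dx L J)^2 \<le> 1/2"
    and "n \<ge> 1"
  shows "dt * (\<Sum>k<n. (eta L J dt) ^ k) \<le> 2 * L^2"
proof -
  define dx where "dx = grid_dx L J"
  define r where "r = dt / dx^2"
  define a where "a = 1 / (8 * (real J - 1)^2)"
  define c where "c = 1 - dt / (2 * L^2)"
  have J: "real J \<ge> 2" using assms by simp
  have dx: "dx = L / (real J - 1)" "dx > 0" unfolding dx_def grid_dx_def using J assms by auto
  have r0: "r \<ge> 0" and r1: "r \<le> 1/2" unfolding r_def using assms dx by (auto simp: dx_def)
  have J1: "real J - 1 \<noteq> 0" using J by simp
  have dd: "dx^2 * (8*(real J-1)^2) = 8*L^2" unfolding dx(1) using J1 by (simp add: field_simps)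
  have "r * a = dt / (dx^2 * (8*(real J-1)^2))" unfolding r_def a_def by simp
  hence ra: "dt / (2 * L^2) = 4 * r * a" unfolding dd by simp
  have bound: "\<bar>1 + dt * eig L J l\<bar> \<le> c" if l: "l \<in> {1..J-1}" for l
  proof -
    define q where "q = (sin (real l * pi / (2 * real J)))^2"
    have e: "dt * eig L J l = - 4 * r * q"
      unfolding eig_def q_def r_def dx_def by (simp add: field_simps)
    have qa: "a \<le> q" unfolding q_def a_def using sin_grid_lb[of J l] l assms by auto
    have cs: "cos (real l * pi / (2 * real J)) = sin (real (J - l) * pi / (2 * real J))"
    proof -
      have "real (J - l) * pi / (2 * real J) = pi/2 - real l * pi / (2 * real J)"
      proof -
        have "real (J - l) = real J - real l" using l by (subst of_nat_diff) auto
        thus ?thesis using J by (simp add: field_simps)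
      qed
      thus ?thesis by (simp add: sin_cos_eq)
    qed
    have "a \<le> (cos (real l * pi / (2 * real J)))^2"
      unfolding cs a_def using sin_grid_lb[of J "J - l"] l assms by auto
    hence qa2: "q + a \<le> 1" unfolding q_def using sin_cos_squared_add[of "real l * pi / (2 * real J)"]
      by linarith
    have h1: "r * a \<le> r * q" using qa r0 by (rule mult_left_mono)
    have a0: "0 \<le> a" unfolding a_def by simp
    have "r * (q + a) \<le> (1/2) * 1" using r1 qa2 qa a0 by (intro mult_mono) auto
    hence h2: "r * (q + a) \<le> 1/2" by simp
    show ?thesis unfolding e c_def ra using h1 h2 by (simp add: algebra_simps abs_le_iff)
  qed
  have fin: "finite ((\<lambda>l. \<bar>1 + dt * eig L J l\<bar>) ` {1..J-1})" by simp
  have ne: "(\<lambda>l. \<bar>1 + dt * eig L J l\<bar>) ` {1..J-1} \<noteq> {}" using assms by auto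
  have ec: "eta L J dt \<le> c" unfolding eta_def using bound fin ne by (simp add: Max_le_iff)
  have e0: "0 \<le> eta L J dt" unfolding eta_def
  proof -
    have "1 \<in> {1..J-1}" using assms by auto
    hence "\<bar>1 + dt * eig L J 1\<bar> \<le> Max ((\<lambda>l. \<bar>1 + dt * eig L J l\<bar>) ` {1..J-1})"
      using fin by (intro Max_ge) auto
    thus "0 \<le> Max ((\<lambda>l. \<bar>1 + dt * eig L J l\<bar>) ` {1..J-1})" by linarith
  qed
  have c1: "c < 1" unfolding c_def using assms by simp
  have "(\<Sum>k<n. (eta L J dt) ^ k) \<le> (\<Sum>k<n. c ^ k)"
    using e0 ec by (intro sum_mono power_mono) auto
  also have "\<dots> = (1 - c^n) / (1 - c)" using c1 by (simp add: sum_gp_strict)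
  also have "\<dots> \<le> 1 / (1 - c)"
    using c1 e0 ec by (intro divide_right_mono) auto
  also have "\<dots> = 2 * L^2 / dt" unfolding c_def using assms by simp
  finally have "dt * (\<Sum>k<n. (eta L J dt) ^ k) \<le> dt * (2 * L^2 / dt)"
    using assms by (intro mult_left_mono) auto
  thus ?thesis using assms by simp
qed

end
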